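(* For the iterates of SONATA with step-size $\alpha\in(0,1]$ under Assumptions (A), (B), (C), (W), for all $\nu\ge0$: $$\|d^\nu\|^2\le\frac6\mu\Big(\Big(\frac{D_{\max}}{\tilde\mu_{\min}}+1\Big)^2+\frac{4L_{\max}^2}{\tilde\mu_{\min}^2}\Big)p^\nu+\frac3{\tilde\mu_{\min}^2}\|y_\perp^\nu\|^2.$$
   Context: Problem (P): minimize $U=F+G$ over $\mathcal K$, $F=\frac1m\sum_{i=1}^mf_i$. (A): $\mathcal K\subseteq\mathbb R^d$ nonempty closed convex; $f_i$ twice differentiable convex on open $\mathcal O\supseteq\mathcal K$; $\mu I\preceq\nabla^2F\preceq LI$ on $\mathcal K$ ($\mu>0$, $L<\infty$); $G$ convex on $\mathcal K$; $x^\star$ unique minimizer, $U^\star=U(x^\star)$. $\nabla^2f_i\preceq L_iI$ on $\mathcal K$, $L_{\max}=\max_iL_i$. (B): connected undirected graph on $\{1,\dots,m\}$, edges $\mathcal E$. (W): $w_{ii}>0$; for $i\ne j$, $w_{ij}>0$ iff $(i,j)\in\mathcal E$, else 0; $W$ doubly stochastic. (C): $\tilde f_i:\mathcal O\times\mathcal O\to\mathbb R$ $C^2$, $\nabla\tilde f_i(x;x)=\nabla f_i(x)$, $\nabla\tilde f_i(\cdot;x)$ $\tilde L_i$-Lipschitz and $\tilde f_i(\cdot;x)$ $\tilde\mu_i$-strongly convex on $\mathcal K$ for all $x\in\mathcal K$; constants $D_i^\ell\le D_i^u$ with $D_i^\ell I\preceq\nabla^2\tilde f_i(x;y)-\nabla^2F(x)\preceq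 D_i^uI$ on $\mathcal K\times\mathcal K$; $D_i=\max\{|D_i^\ell|,|D_i^u|\}$, $D_{\max}=\max D_i$, $\tilde\mu_{\min}=\min\tilde\mu_i$. SONATA: $x_i^0\in\mathcal K$, $y_i^0=\nabla f_i(x_i^0)$; $\hat x_i^\nu=\arg\min_{x_i\in\mathcal K}\tilde f_i(x_i;x_i^\nu)+(y_i^\nu-\nabla f_i(x_i^\nu))^\top(x_i-x_i^\nu)+G(x_i)$; $d_i^\nu=\hat x_i^\nu-x_i^\nu$; $x_i^{\nu+1/2}=x_i^\nu+\alpha d_i^\nu$; $x_i^{\nu+1}=\sum_jw_{ij}x_j^{\nu+1/2}$; $y_i^{\nu+1}=\sum_jw_{ij}(y_j^\nu+\nabla f_j(x_j^{\nu+1})-\nabla f_j(x_j^\nu))$. $d^\nu,y^\nu$ stack local vectors; $y_\perp^\nu=y^\nu-\mathbf1_m\otimes\frac1m\sum_iy_i^\nu$; $p^\nu=\sum_i(U(x_i^\nu)-U^\star)$. *)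

theory Defs
  imports "HOL-Analysis.Analysis"
begin

definition strongly_convex_with :: "'a::real_inner set \<Rightarrow> real \<Rightarrow> ('a \<Rightarrow> real) \<Rightarrow> bool" where
  "strongly_convex_with S c g \<longleftrightarrow> convex S \<and> convex_on S (\<lambda>x. g x - (c / 2) * (norm x)\<^sup>2)"

definition C2_on :: "'b::euclidean_space set \<Rightarrow> ('b \<Rightarrow> real) \<Rightarrow> bool" where
  "C2_on S g \<longleftrightarrow> (\<exists>(g' :: 'b \<Rightarrow> 'b \<Rightarrow>\<^sub>L real) (g'' :: 'b \<Rightarrow> 'b \<Rightarrow>\<^sub>L ('b \<Rightarrow>\<^sub>L real)).
      (\<forall>x\<in>S. (g has_derivative blinfun_apply (g' x)) (at x)) \<and>
      (\<forall>x\<in>S. (g' has_derivative blinfun_apply (g'' x)) (at x)) \<and>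
      continuous_on S g'')"

definition connected_graph :: "nat \<Rightarrow> (nat \<times> nat) set \<Rightarrow> bool" where
  "connected_graph m E \<longleftrightarrow> (\<forall>i<m. \<forall>j<m. (i, j) \<in> E\<^sup>*)"

end

theory Submission
  imports Defs
begin

lemma line_deriv:
  fixes s :: "'a::real_normed_vector \<Rightarrow> real"
  assumes "(s has_derivative s') (at (a + t *\<^sub>R h))"
  shows "((\<lambda>t. s (a + t *\<^sub>R h)) has_real_derivative s' h) (at t)"
proof -
  have l: "linear s'" using assms has_derivative_linear by blast
  have d1: "((\<lambda>t. a + t *\<^sub>R h) has_derivative (\<lambda>u. u *\<^sub>R h)) (at t)"
    by (auto intro!: derivative_eq_intros)
  have "((\<lambda>t. s (a + t *\<^sub>R h)) has_derivative (\<lambda>u. s' (u *\<^sub>R h))) (at t)"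
    using has_derivative_compose[OF d1 assms] by simp
  moreover have "(\<lambda>u. s' (u *\<^sub>R h)) = (*) (s' h)"
    using l by (auto simp: linear_scale)
  ultimately show ?thesis by (simp add: has_field_derivative_def)
qed

lemma deriv_sign:
  fixes \<phi> :: "real \<Rightarrow> real"
  assumes "(\<phi> has_real_derivative c) (at 0)" "d > 0"
    and "\<And>t. 0 < t \<Longrightarrow> t < d \<Longrightarrow> \<phi> 0 \<le> \<phi> t"
  shows "0 \<le> c"
proof (rule ccontr)
  assume "\<not> 0 \<le> c"
  then obtain e where e: "e > 0" "\<forall>h>0. h < e \<longrightarrow> \<phi> 0 > \<phi> (0 + h)"
    using DERIV_neg_dec_right[OF assms(1)] by force
  have "\<phi> 0 > \<phi> (min e d / 2)" using e by (simp add: assms(2))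
  moreover have "\<phi> 0 \<le> \<phi> (min e d / 2)" using assms(3) e assms(2) by simp
  ultimately show False by simp
qed

lemma vi_lemma:
  fixes s G :: "'a::real_inner \<Rightarrow> real"
  assumes K: "convex K" and G: "convex_on K G" and a: "a \<in> K" and z: "z \<in> K"
    and ds: "(s has_derivative (\<lambda>h. gs \<bullet> h)) (at a)"
    and mn: "\<And>w. w \<in> K \<Longrightarrow> s a + G a \<le> s w + G w"
  shows "0 \<le> gs \<bullet> (z - a) + G z - G a"
proof -
  define \<phi> where "\<phi> t = s (a + t *\<^sub>R (z - a)) + t * (G z - G a)" for t
  have d1: "((\<lambda>t. s (a + t *\<^sub>R (z - a))) has_real_derivative gs \<bullet> (z - a)) (at 0)"
    using line_deriv[of s "\<lambda>h. gs \<bullet> h" a 0 "z - a"] ds by simp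
  have "(\<phi> has_real_derivative gs \<bullet> (z - a) + (G z - G a)) (at 0)"
    unfolding \<phi>_def by (auto intro!: derivative_eq_intros d1)
  note D = this
  have M: "\<phi> 0 \<le> \<phi> t" if "0 < t" "t < 1" for t
  proof -
    have p: "a + t *\<^sub>R (z - a) = (1 - t) *\<^sub>R a + t *\<^sub>R z" by (simp add: algebra_simps)
    have pK: "a + t *\<^sub>R (z - a) \<in> K" unfolding p
      using K a z that by (simp add: convexD)
    have "G (a + t *\<^sub>R (z - a)) \<le> (1 - t) * G a + t * G z"
      unfolding p using convex_onD[OF G, of t a z] that a z by simp
    with mn[OF pK] show ?thesis unfolding \<phi>_def by (simp add: algebra_simps)
  qed
  have "0 \<le> gs \<bullet> (z - a) + (G z - G a)"
    using deriv_sign[OF D zero_less_one M] by blast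
  then show ?thesis by simp
qed

lemma fo_convex:
  fixes g :: "'a::real_inner \<Rightarrow> real"
  assumes g: "convex_on K g" and a: "a \<in> K" and z: "z \<in> K"
    and dg: "(g has_derivative (\<lambda>h. gg \<bullet> h)) (at a)"
  shows "g a + gg \<bullet> (z - a) \<le> g z"
proof -
  have K: "convex K" using g by (simp add: convex_on_def)
  define \<phi> where "\<phi> t = t * (g z - g a) - g (a + t *\<^sub>R (z - a))" for t
  have d1: "((\<lambda>t. g (a + t *\<^sub>R (z - a))) has_real_derivative gg \<bullet> (z - a)) (at 0)"
    using line_deriv[of g "\<lambda>h. gg \<bullet> h" a 0 "z - a"] dg by simp
  have "(\<phi> has_real_derivative (g z - g a) - gg \<bullet> (z - a)) (at 0)"
    unfolding \<phi>_def by (auto intro!: derivative_eq_intros d1)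
  note D = this
  have M: "\<phi> 0 \<le> \<phi> t" if "0 < t" "t < 1" for t
  proof -
    have p: "a + t *\<^sub>R (z - a) = (1 - t) *\<^sub>R a + t *\<^sub>R z" by (simp add: algebra_simps)
    have "g (a + t *\<^sub>R (z - a)) \<le> (1 - t) * g a + t * g z"
      unfolding p using convex_onD[OF g, of t a z] that a z by simp
    then show ?thesis unfolding \<phi>_def by (simp add: algebra_simps)
  qed
  have "0 \<le> (g z - g a) - gg \<bullet> (z - a)"
    using deriv_sign[OF D zero_less_one M] by blast
  then show ?thesis by simp
qed


lemma ball_add_in:
  fixes z v :: "'a::real_normed_vector"
  assumes "norm v < r" "ball z r \<subseteq> S" shows "z + v \<in> S"
proof -
  have "dist z (z + v) = norm v" by (simp add: dist_norm norm_minus_commute)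
  then show ?thesis using assms by auto
qed

lemma hess_aux:
  fixes f :: "'a::real_inner \<Rightarrow> real" and g :: "'a \<Rightarrow> 'a"
  assumes Oo: "open Oo" and zO: "z \<in> Oo"
    and df: "\<And>w. w \<in> Oo \<Longrightarrow> (f has_derivative (\<lambda>u. g w \<bullet> u)) (at w)"
    and dg: "(g has_derivative H) (at z)"
    and e: "e > 0"
  shows "\<exists>d>0. \<forall>s. 0 < s \<and> s < d \<longrightarrow>
     \<bar>(f (z + s *\<^sub>R h + s *\<^sub>R k) - f (z + s *\<^sub>R h) - f (z + s *\<^sub>R k) + f z) - s\<^sup>2 * (H h \<bullet> k)\<bar> \<le> e * s\<^sup>2"
proof -
  define C where "C = norm h + norm k + 1"
  have C: "C > 0" "norm h \<le> C" "norm k \<le> C" unfolding C_def by (auto simp: add_nonneg_pos)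
  define e' where "e' = e / (3 * C\<^sup>2)"
  have e': "e' > 0" using e C by (simp add: e'_def)
  have lH: "linear H" using dg has_derivative_linear by blast
  obtain d1 where d1: "d1 > 0" "\<And>y. norm (y - z) < d1 \<Longrightarrow> norm (g y - g z - H (y - z)) \<le> e' * norm (y - z)"
    using dg e' unfolding has_derivative_at_alt by blast
  obtain r where r: "r > 0" "ball z r \<subseteq> Oo" using Oo zO open_contains_ball by blast
  define d where "d = min d1 r / (2 * C)"
  have "d > 0" using d1 r C by (simp add: d_def)
  moreover have "\<bar>(f (z + s *\<^sub>R h + s *\<^sub>R k) - f (z + s *\<^sub>R h) - f (z + s *\<^sub>R k) + f z) - s\<^sup>2 * (H h \<bullet> k)\<bar> \<le> e * s\<^sup>2"
    if s: "0 < s" "s < d" for s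
  proof -
    have sC: "2 * s * C < min d1 r" using s C by (auto simp: d_def field_simps)
    have sC2: "s * C < min d1 r" proof -
      have "0 < s * C" using s C by simp
      then show ?thesis using sC by linarith
    qed
    have nb: "norm (s *\<^sub>R h + t *\<^sub>R k) \<le> 2 * s * C" "norm (t *\<^sub>R k) \<le> s * C"
      if "0 \<le> t" "t \<le> s" for t
    proof -
      have "norm (s *\<^sub>R h + t *\<^sub>R k) \<le> s * norm h + t * norm k"
        using norm_triangle_ineq[of "s *\<^sub>R h" "t *\<^sub>R k"] that s by simp
      also have "\<dots> \<le> s * C + s * C" using that s C
        by (intro add_mono mult_mono) auto
      finally show "norm (s *\<^sub>R h + t *\<^sub>R k) \<le> 2 * s * C" by (simp add: mult.commute mult.left_commute)
      have "t * norm k \<le> s * C" using that C by (intro mult_mono) auto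
      then show "norm (t *\<^sub>R k) \<le> s * C" using that by simp
    qed
    define q where "q t = f (z + s *\<^sub>R h + t *\<^sub>R k) - f (z + t *\<^sub>R k)" for t
    define q' where "q' t = g (z + s *\<^sub>R h + t *\<^sub>R k) \<bullet> k - g (z + t *\<^sub>R k) \<bullet> k" for t
    have inO: "z + s *\<^sub>R h + t *\<^sub>R k \<in> Oo" "z + t *\<^sub>R k \<in> Oo" if "0 \<le> t" "t \<le> s" for t
    proof -
      have "norm (s *\<^sub>R h + t *\<^sub>R k) < r" using nb(1)[OF that] sC by simp
      then show "z + s *\<^sub>R h + t *\<^sub>R k \<in> Oo" using ball_add_in[OF _ r(2)] by (simp add: add.assoc)
      have "norm (t *\<^sub>R k) < r" using nb(2)[OF that] sC2 by simp
      then show "z + t *\<^sub>R k \<in> Oo" using ball_add_in[OF _ r(2)] by simp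
    qed
    have "(q has_real_derivative q' t) (at t)" if "0 \<le> t" "t \<le> s" for t
    proof -
      have a: "((\<lambda>t. f ((z + s *\<^sub>R h) + t *\<^sub>R k)) has_real_derivative g (z + s *\<^sub>R h + t *\<^sub>R k) \<bullet> k) (at t)"
        using line_deriv[OF df[OF inO(1)[OF that]]] by simp
      have b: "((\<lambda>t. f (z + t *\<^sub>R k)) has_real_derivative g (z + t *\<^sub>R k) \<bullet> k) (at t)"
        using line_deriv[OF df[OF inO(2)[OF that]]] by simp
      show ?thesis unfolding q_def q'_def using DERIV_diff[OF a b] by simp
    qed
    then obtain \<tau> where \<tau>: "0 < \<tau>" "\<tau> < s" "q s - q 0 = (s - 0) * q' \<tau>"
      using MVT2[OF s(1), of q q'] by auto
    have qq: "q s - q 0 = f (z + s *\<^sub>R h + s *\<^sub>R k) - f (z + s *\<^sub>R h) - f (z + s *\<^sub>R k) + f z"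
      unfolding q_def by simp
    define r1 where "r1 = g (z + s *\<^sub>R h + \<tau> *\<^sub>R k) - g z - H (s *\<^sub>R h + \<tau> *\<^sub>R k)"
    define r2 where "r2 = g (z + \<tau> *\<^sub>R k) - g z - H (\<tau> *\<^sub>R k)"
    have r1: "norm r1 \<le> e' * (2 * s * C)"
    proof -
      have "norm (s *\<^sub>R h + \<tau> *\<^sub>R k) < d1" using nb(1)[of \<tau>] \<tau> sC by simp
      then have "norm r1 \<le> e' * norm (s *\<^sub>R h + \<tau> *\<^sub>R k)"
        using d1(2)[of "z + s *\<^sub>R h + \<tau> *\<^sub>R k"] unfolding r1_def by (simp add: add.assoc)
      also have "\<dots> \<le> e' * (2 * s * C)" using nb(1)[of \<tau>] \<tau> e' by (intro mult_left_mono) auto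
      finally show ?thesis .
    qed
    have r2: "norm r2 \<le> e' * (s * C)"
    proof -
      have "norm (\<tau> *\<^sub>R k) < d1" using nb(2)[of \<tau>] \<tau> sC2 by simp
      then have "norm r2 \<le> e' * norm (\<tau> *\<^sub>R k)"
        using d1(2)[of "z + \<tau> *\<^sub>R k"] unfolding r2_def by simp
      also have "\<dots> \<le> e' * (s * C)" using nb(2)[of \<tau>] \<tau> e' by (intro mult_left_mono) auto
      finally show ?thesis .
    qed
    have q'eq: "q' \<tau> = s * (H h \<bullet> k) + (r1 - r2) \<bullet> k"
      unfolding q'_def r1_def r2_def
      by (simp add: linear_add[OF lH] linear_scale[OF lH] algebra_simps inner_diff_left inner_add_left)
    have "\<bar>(r1 - r2) \<bullet> k\<bar> \<le> norm (r1 - r2) * norm k" by (rule Cauchy_Schwarz_ineq2)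
    also have "\<dots> \<le> (norm r1 + norm r2) * C"
      using C by (intro mult_mono norm_triangle_ineq4) auto
    also have "\<dots> \<le> (e' * (2 * s * C) + e' * (s * C)) * C"
      using r1 r2 C by (intro mult_right_mono add_mono) auto
    also have "\<dots> = 3 * e' * C\<^sup>2 * s" by (simp add: power2_eq_square algebra_simps)
    also have "\<dots> = e * s" using C by (simp add: e'_def)
    finally have bd: "\<bar>(r1 - r2) \<bullet> k\<bar> \<le> e * s" .
    have "\<bar>(q s - q 0) - s\<^sup>2 * (H h \<bullet> k)\<bar> = s * \<bar>(r1 - r2) \<bullet> k\<bar>"
    proof -
      have "(q s - q 0) - s\<^sup>2 * (H h \<bullet> k) = s * ((r1 - r2) \<bullet> k)"
        using \<tau>(3) q'eq by (simp add: power2_eq_square algebra_simps)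
      then show ?thesis using s by (simp add: abs_mult)
    qed
    also have "\<dots> \<le> s * (e * s)" using bd s by (intro mult_left_mono) auto
    finally show ?thesis unfolding qq by (simp add: power2_eq_square mult.commute mult.left_commute)
  qed
  ultimately show ?thesis by blast
qed

lemma hess_sym:
  fixes f :: "'a::real_inner \<Rightarrow> real" and g :: "'a \<Rightarrow> 'a"
  assumes Oo: "open Oo" and zO: "z \<in> Oo"
    and df: "\<And>w. w \<in> Oo \<Longrightarrow> (f has_derivative (\<lambda>u. g w \<bullet> u)) (at w)"
    and dg: "(g has_derivative H) (at z)"
  shows "H h \<bullet> k = H k \<bullet> h"
proof (rule ccontr)
  assume ne: "H h \<bullet> k \<noteq> H k \<bullet> h"
  define e where "e = \<bar>H h \<bullet> k - H k \<bullet> h\<bar> / 4"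
  have e: "e > 0" using ne by (simp add: e_def)
  obtain d1 where d1: "d1 > 0" "\<And>s. 0 < s \<and> s < d1 \<Longrightarrow>
     \<bar>(f (z + s *\<^sub>R h + s *\<^sub>R k) - f (z + s *\<^sub>R h) - f (z + s *\<^sub>R k) + f z) - s\<^sup>2 * (H h \<bullet> k)\<bar> \<le> e * s\<^sup>2"
    using hess_aux[OF Oo zO df dg e, of h k] by blast
  obtain d2 where d2: "d2 > 0" "\<And>s. 0 < s \<and> s < d2 \<Longrightarrow>
     \<bar>(f (z + s *\<^sub>R k + s *\<^sub>R h) - f (z + s *\<^sub>R k) - f (z + s *\<^sub>R h) + f z) - s\<^sup>2 * (H k \<bullet> h)\<bar> \<le> e * s\<^sup>2"
    using hess_aux[OF Oo zO df dg e, of k h] by blast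
  define s where "s = min d1 d2 / 2"
  have s: "0 < s" "s < d1" "s < d2" using d1 d2 by (auto simp: s_def)
  have eq: "z + s *\<^sub>R k + s *\<^sub>R h = z + s *\<^sub>R h + s *\<^sub>R k" by (simp add: algebra_simps)
  define A where "A = f (z + s *\<^sub>R h + s *\<^sub>R k) - f (z + s *\<^sub>R h) - f (z + s *\<^sub>R k) + f z"
  have a1: "\<bar>A - s\<^sup>2 * (H h \<bullet> k)\<bar> \<le> e * s\<^sup>2" using d1(2)[of s] s unfolding A_def by simp
  have a2: "\<bar>A - s\<^sup>2 * (H k \<bullet> h)\<bar> \<le> e * s\<^sup>2" using d2(2)[of s] s unfolding A_def eq by simp
  have "s\<^sup>2 * \<bar>H h \<bullet> k - H k \<bullet> h\<bar> = \<bar>s\<^sup>2 * (H h \<bullet> k) - s\<^sup>2 * (H k \<bullet> h)\<bar>"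
    by (metis abs_mult abs_power2 right_diff_distrib)
  also have "\<dots> \<le> 2 * e * s\<^sup>2" using a1 a2 by linarith
  finally have "s\<^sup>2 * (4 * e) \<le> s\<^sup>2 * (2 * e)" by (simp add: e_def mult.commute mult.left_commute)
  then have "4 * e \<le> 2 * e" using s by simp
  then show False using e by simp
qed


lemma sym_bound:
  fixes A :: "'a::real_inner \<Rightarrow> 'a"
  assumes lA: "linear A" and sy: "\<And>h k. A h \<bullet> k = A k \<bullet> h"
    and bd: "\<And>h. lo * (norm h)\<^sup>2 \<le> A h \<bullet> h \<and> A h \<bullet> h \<le> hi * (norm h)\<^sup>2"
  shows "norm (A h) \<le> max \<bar>lo\<bar> \<bar>hi\<bar> * norm h"
proof -
  define D where "D = max \<bar>lo\<bar> \<bar>hi\<bar>"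
  have ab: "\<bar>A u \<bullet> u\<bar> \<le> D * (norm u)\<^sup>2" for u
  proof -
    have "-D \<le> lo" "hi \<le> D" unfolding D_def by auto
    then have "lo * (norm u)\<^sup>2 \<ge> - D * (norm u)\<^sup>2" "hi * (norm u)\<^sup>2 \<le> D * (norm u)\<^sup>2"
      using mult_right_mono[of "-D" lo "(norm u)\<^sup>2"] mult_right_mono[of hi D "(norm u)\<^sup>2"] by auto
    then show ?thesis using bd[of u] by linarith
  qed
  show ?thesis
  proof (cases "A h = 0 \<or> h = 0")
    case True
    then show ?thesis using linear_0[OF lA] by (auto simp: D_def)
  next
    case False
    define v where "v = A h"
    define t where "t = norm h / norm v"
    have t: "t > 0" using False by (simp add: t_def v_def)
    define w where "w = t *\<^sub>R v"
    have nw: "norm w = norm h" using False by (simp add: w_def t_def v_def)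
    have "A (h + w) \<bullet> (h + w) - A (h - w) \<bullet> (h - w) = 2 * (A h \<bullet> w) + 2 * (A w \<bullet> h)"
      by (simp add: linear_add[OF lA] linear_diff[OF lA] inner_add_left inner_add_right
          inner_diff_left inner_diff_right algebra_simps)
    also have "\<dots> = 4 * (A h \<bullet> w)" using sy[of w h] by simp
    also have "\<dots> = 4 * t * (norm v)\<^sup>2" by (simp add: w_def v_def power2_norm_eq_inner)
    also have "\<dots> = 4 * norm h * norm v" using False by (simp add: t_def v_def power2_eq_square)
    finally have e1: "A (h + w) \<bullet> (h + w) - A (h - w) \<bullet> (h - w) = 4 * norm h * norm v" .
    have "A (h + w) \<bullet> (h + w) - A (h - w) \<bullet> (h - w) \<le> D * (norm (h + w))\<^sup>2 + D * (norm (h - w))\<^sup>2"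
      using ab[of "h + w"] ab[of "h - w"] by linarith
    also have "\<dots> = D * (2 * (norm h)\<^sup>2 + 2 * (norm w)\<^sup>2)"
      by (simp add: power2_norm_eq_inner inner_add_left inner_add_right inner_diff_left
          inner_diff_right algebra_simps inner_commute)
    also have "\<dots> = 4 * norm h * (D * norm h)" using nw by (simp add: power2_eq_square algebra_simps)
    finally have "4 * norm h * norm v \<le> 4 * norm h * (D * norm h)" using e1 by simp
    then have "norm v \<le> D * norm h" using False by simp
    then show ?thesis by (simp add: v_def D_def)
  qed
qed

lemma sq3: "(p + q + w :: real)\<^sup>2 \<le> 3 * (p\<^sup>2 + q\<^sup>2 + w\<^sup>2)"
proof -
  have "0 \<le> (p - q)\<^sup>2 + (q - w)\<^sup>2 + (p - w)\<^sup>2" by simp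
  then show ?thesis by (simp add: power2_eq_square algebra_simps)
qed

lemma sq2: "(p + q :: real)\<^sup>2 \<le> 2 * (p\<^sup>2 + q\<^sup>2)"
proof -
  have "0 \<le> (p - q)\<^sup>2" by simp
  then show ?thesis by (simp add: power2_eq_square algebra_simps)
qed


theorem proposition3p6:
  fixes m :: nat
    and K Oset :: "'a::euclidean_space set"
    and f :: "nat \<Rightarrow> 'a \<Rightarrow> real" and gf :: "nat \<Rightarrow> 'a \<Rightarrow> 'a" and Hf :: "nat \<Rightarrow> 'a \<Rightarrow> 'a \<Rightarrow> 'a"
    and G :: "'a \<Rightarrow> real"
    and \<mu> L :: real and Li :: "nat \<Rightarrow> real"
    and xstar :: 'a
    and E :: "(nat \<times> nat) set" and W :: "nat \<Rightarrow> nat \<Rightarrow> real"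
    and tf :: "nat \<Rightarrow> 'a \<Rightarrow> 'a \<Rightarrow> real" and gtf :: "nat \<Rightarrow> 'a \<Rightarrow> 'a \<Rightarrow> 'a"
    and Htf :: "nat \<Rightarrow> 'a \<Rightarrow> 'a \<Rightarrow> 'a \<Rightarrow> 'a"
    and tL t\<mu> Dl Du :: "nat \<Rightarrow> real"
    and \<alpha> :: real
    and x y xhat :: "nat \<Rightarrow> nat \<Rightarrow> 'a"
    and \<nu> :: nat
  defines "U \<equiv> (\<lambda>z. (1 / real m) * (\<Sum>i<m. f i z) + G z)"
    and "HF \<equiv> (\<lambda>z h. (1 / real m) *\<^sub>R (\<Sum>i<m. Hf i z h))"
    and "Lmax \<equiv> Max (Li ` {..<m})"
    and "Dmax \<equiv> Max ((\<lambda>i. max \<bar>Dl i\<bar> \<bar>Du i\<bar>) ` {..<m})"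
    and "t\<mu>min \<equiv> Min (t\<mu> ` {..<m})"
    and "d \<equiv> (\<lambda>k i. xhat k i - x k i)"
  assumes m_pos: "m \<ge> 1"
    \<comment> \<open>(A)\<close>
    and K_ne: "K \<noteq> {}" and K_closed: "closed K" and K_convex: "convex K"
    and O_open: "open Oset" and K_sub: "K \<subseteq> Oset"
    and f_grad: "\<And>i z. i < m \<Longrightarrow> z \<in> Oset \<Longrightarrow> (f i has_derivative (\<lambda>h. gf i z \<bullet> h)) (at z)"
    and f_hess: "\<And>i z. i < m \<Longrightarrow> z \<in> Oset \<Longrightarrow> (gf i has_derivative Hf i z) (at z)"
    and f_convex: "\<And>i. i < m \<Longrightarrow> convex_on Oset (f i)"
    and mu_pos: "\<mu> > 0"
    and HF_bounds: "\<And>z h. z \<in> K \<Longrightarrow> \<mu> * (norm h)\<^sup>2 \<le> HF z h \<bullet> h \<and> HF z h \<bullet> h \<le> L * (norm h)\<^sup>2"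
    and G_convex: "convex_on K G"
    and xstar_in: "xstar \<in> K"
    and xstar_min: "\<And>z. z \<in> K \<Longrightarrow> U xstar \<le> U z"
    and xstar_unique: "\<And>z. z \<in> K \<Longrightarrow> U z = U xstar \<Longrightarrow> z = xstar"
    and Li_bound: "\<And>i z h. i < m \<Longrightarrow> z \<in> K \<Longrightarrow> Hf i z h \<bullet> h \<le> Li i * (norm h)\<^sup>2"
    \<comment> \<open>(B)\<close>
    and E_sub: "E \<subseteq> {..<m} \<times> {..<m}"
    and E_sym: "\<And>i j. (i, j) \<in> E \<Longrightarrow> (j, i) \<in> E"
    and E_irrefl: "\<And>i. (i, i) \<notin> E"
    and E_conn: "connected_graph m E"
    \<comment> \<open>(W)\<close>
    and W_diag: "\<And>i. i < m \<Longrightarrow> W i i > 0"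
    and W_off: "\<And>i j. i < m \<Longrightarrow> j < m \<Longrightarrow> i \<noteq> j \<Longrightarrow> (W i j > 0 \<longleftrightarrow> (i, j) \<in> E) \<and> ((i, j) \<notin> E \<longrightarrow> W i j = 0)"
    and W_row: "\<And>i. i < m \<Longrightarrow> (\<Sum>j<m. W i j) = 1"
    and W_col: "\<And>j. j < m \<Longrightarrow> (\<Sum>i<m. W i j) = 1"
    \<comment> \<open>(C)\<close>
    and tf_C2: "\<And>i. i < m \<Longrightarrow> C2_on (Oset \<times> Oset) (\<lambda>p. tf i (fst p) (snd p))"
    and tf_grad: "\<And>i z w. i < m \<Longrightarrow> z \<in> Oset \<Longrightarrow> w \<in> Oset \<Longrightarrow>
                    ((\<lambda>u. tf i u w) has_derivative (\<lambda>h. gtf i z w \<bullet> h)) (at z)"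
    and tf_hess: "\<And>i z w. i < m \<Longrightarrow> z \<in> Oset \<Longrightarrow> w \<in> Oset \<Longrightarrow>
                    ((\<lambda>u. gtf i u w) has_derivative Htf i z w) (at z)"
    and tf_consistent: "\<And>i z. i < m \<Longrightarrow> z \<in> Oset \<Longrightarrow> gtf i z z = gf i z"
    and tf_lipschitz: "\<And>i w u v. i < m \<Longrightarrow> w \<in> K \<Longrightarrow> u \<in> K \<Longrightarrow> v \<in> K \<Longrightarrow>
                    norm (gtf i u w - gtf i v w) \<le> tL i * norm (u - v)"
    and tmu_pos: "\<And>i. i < m \<Longrightarrow> t\<mu> i > 0"
    and tf_strong: "\<And>i w. i < m \<Longrightarrow> w \<in> K \<Longrightarrow> strongly_convex_with K (t\<mu> i) (\<lambda>u. tf i u w)"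
    and D_le: "\<And>i. i < m \<Longrightarrow> Dl i \<le> Du i"
    and D_bounds: "\<And>i z w h. i < m \<Longrightarrow> z \<in> K \<Longrightarrow> w \<in> K \<Longrightarrow>
                    Dl i * (norm h)\<^sup>2 \<le> (Htf i z w h - HF z h) \<bullet> h \<and>
                    (Htf i z w h - HF z h) \<bullet> h \<le> Du i * (norm h)\<^sup>2"
    \<comment> \<open>SONATA\<close>
    and alpha: "0 < \<alpha>" "\<alpha> \<le> 1"
    and x0: "\<And>i. i < m \<Longrightarrow> x 0 i \<in> K"
    and y0: "\<And>i. i < m \<Longrightarrow> y 0 i = gf i (x 0 i)"
    and xhat_in: "\<And>k i. i < m \<Longrightarrow> xhat k i \<in> K"
    and xhat_min: "\<And>k i z. i < m \<Longrightarrow> z \<in> K \<Longrightarrow>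
        tf i (xhat k i) (x k i) + (y k i - gf i (x k i)) \<bullet> (xhat k i - x k i) + G (xhat k i)
          \<le> tf i z (x k i) + (y k i - gf i (x k i)) \<bullet> (z - x k i) + G z"
    and x_step: "\<And>k i. i < m \<Longrightarrow> x (Suc k) i = (\<Sum>j<m. W i j *\<^sub>R (x k j + \<alpha> *\<^sub>R d k j))"
    and y_step: "\<And>k i. i < m \<Longrightarrow>
        y (Suc k) i = (\<Sum>j<m. W i j *\<^sub>R (y k j + gf j (x (Suc k) j) - gf j (x k j)))"
  shows "(\<Sum>i<m. (norm (d \<nu> i))\<^sup>2)
    \<le> 6 / \<mu> * ((Dmax / t\<mu>min + 1)\<^sup>2 + 4 * Lmax\<^sup>2 / t\<mu>min\<^sup>2) * (\<Sum>i<m. U (x \<nu> i) - U xstar)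
      + 3 / t\<mu>min\<^sup>2 * (\<Sum>i<m. (norm (y \<nu> i - (1 / real m) *\<^sub>R (\<Sum>j<m. y \<nu> j)))\<^sup>2)"
proof -
  have mpos: "real m > 0" using m_pos by simp
  have KO: "\<And>z. z \<in> K \<Longrightarrow> z \<in> Oset" using K_sub by blast
  define gF where "gF = (\<lambda>z. (1 / real m) *\<^sub>R (\<Sum>i<m. gf i z))"
  define F where "F = (\<lambda>z. (1 / real m) * (\<Sum>i<m. f i z))"
  have U_eq: "\<And>z. U z = F z + G z" by (simp add: U_def F_def)
  have W_nn: "\<And>i j. i < m \<Longrightarrow> j < m \<Longrightarrow> W i j \<ge> 0"
    using W_diag W_off by (metis less_eq_real_def order_refl)
  have xK: "\<And>i. i < m \<Longrightarrow> x k i \<in> K" for k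
  proof (induction k)
    case 0 then show ?case using x0 by simp
  next
    case (Suc k)
    fix i assume i: "i < m"
    have "\<And>j. j < m \<Longrightarrow> x k j + \<alpha> *\<^sub>R d k j \<in> K"
    proof -
      fix j assume j: "j < m"
      have "x k j + \<alpha> *\<^sub>R d k j = (1 - \<alpha>) *\<^sub>R x k j + \<alpha> *\<^sub>R xhat k j"
        by (simp add: d_def algebra_simps)
      then show "x k j + \<alpha> *\<^sub>R d k j \<in> K"
        using convexD[OF K_convex Suc.IH[OF j] xhat_in[OF j], of "1 - \<alpha>" \<alpha>] alpha by simp
    qed
    then show "x (Suc k) i \<in> K" unfolding x_step[OF i]
      by (intro convex_sum[OF _ K_convex]) (auto simp: W_row[OF i] W_nn[OF i])
  qed
  have ysum: "(\<Sum>i<m. y k i) = (\<Sum>i<m. gf i (x k i))" for k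
  proof (induction k)
    case 0 then show ?case using y0 by simp
  next
    case (Suc k)
    have "(\<Sum>i<m. y (Suc k) i) = (\<Sum>i<m. \<Sum>j<m. W i j *\<^sub>R (y k j + gf j (x (Suc k) j) - gf j (x k j)))"
      using y_step by simp
    also have "\<dots> = (\<Sum>j<m. (\<Sum>i<m. W i j) *\<^sub>R (y k j + gf j (x (Suc k) j) - gf j (x k j)))"
      by (subst sum.swap) (simp add: scaleR_sum_left)
    also have "\<dots> = (\<Sum>j<m. (y k j + gf j (x (Suc k) j) - gf j (x k j)))"
      using W_col by simp
    also have "\<dots> = (\<Sum>i<m. gf i (x (Suc k) i))"
      using Suc.IH by (simp add: sum.distrib sum_subtractf)
    finally show ?case .
  qed
  have dF: "(F has_derivative (\<lambda>h. gF z \<bullet> h)) (at z)" if "z \<in> Oset" for z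
  proof -
    have "((\<lambda>z. (1/real m) * (\<Sum>i<m. f i z)) has_derivative (\<lambda>h. (1/real m) * (\<Sum>i<m. gf i z \<bullet> h))) (at z)"
      using f_grad that mpos by (auto intro!: derivative_eq_intros)
    then show ?thesis using mpos by (simp add: F_def gF_def inner_sum_left)
  qed
  have dgF: "(gF has_derivative HF z) (at z)" if "z \<in> Oset" for z
  proof -
    have "((\<lambda>z. (1/real m) *\<^sub>R (\<Sum>i<m. gf i z)) has_derivative (\<lambda>h. (1/real m) *\<^sub>R (\<Sum>i<m. Hf i z h))) (at z)"
      using f_hess that mpos by (auto intro!: derivative_eq_intros)
    then show ?thesis by (simp add: HF_def gF_def)
  qed
  have Hf_sym: "Hf i z h \<bullet> k = Hf i z k \<bullet> h" if "i < m" "z \<in> Oset" for i z h k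
    using hess_sym[OF O_open that(2) f_grad[OF that(1)] f_hess[OF that]] .
  have Htf_sym: "Htf i z w h \<bullet> k = Htf i z w k \<bullet> h" if "i < m" "z \<in> Oset" "w \<in> Oset" for i z w h k
    using hess_sym[OF O_open that(2), of "\<lambda>u. tf i u w" "\<lambda>u. gtf i u w"] tf_grad[OF that(1) _ that(3)]
      tf_hess[OF that] by blast
  have HF_sym: "HF z h \<bullet> k = HF z k \<bullet> h" if "z \<in> Oset" for z h k
    using Hf_sym that by (simp add: HF_def inner_sum_left)
  have Hf_lin: "linear (Hf i z)" if "i < m" "z \<in> Oset" for i z
    using f_hess[OF that] has_derivative_linear by blast
  have Htf_lin: "linear (Htf i z w)" if "i < m" "z \<in> Oset" "w \<in> Oset" for i z w
    using tf_hess[OF that] has_derivative_linear by blast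
  have HF_lin: "linear (HF z)" if "z \<in> Oset" for z
    using dgF[OF that] has_derivative_linear by blast
  have Hf_psd: "0 \<le> Hf i z h \<bullet> h" if i: "i < m" and zO: "z \<in> Oset" for i z h
  proof -
    obtain r where r: "r > 0" "ball z r \<subseteq> Oset" using O_open zO open_contains_ball by blast
    have cvx: "convex_on (ball z r) (f i)"
      using convex_on_subset[OF f_convex[OF i] r(2) convex_ball] .
    define \<phi> where "\<phi> t = gf i (z + t *\<^sub>R h) \<bullet> h" for t
    have D: "(\<phi> has_real_derivative Hf i z h \<bullet> h) (at 0)"
      using line_deriv[of "\<lambda>u. gf i u \<bullet> h" "\<lambda>v. Hf i z v \<bullet> h" z 0 h]
        has_derivative_inner_left[OF f_hess[OF i zO]] unfolding \<phi>_def by simp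
    define dd where "dd = r / (norm h + 1)"
    have dd: "dd > 0" using r by (simp add: dd_def add_nonneg_pos)
    have M: "\<phi> 0 \<le> \<phi> t" if t: "0 < t" "t < dd" for t
    proof -
      have "t * norm h \<le> t * (norm h + 1)" using t by simp
      also have "\<dots> < dd * (norm h + 1)" using t by (intro mult_strict_right_mono) (auto simp: add_nonneg_pos)
      also have "\<dots> = r" proof -
        have "norm h + 1 > 0" by (simp add: add_nonneg_pos)
        then show ?thesis by (simp add: dd_def)
      qed
      finally have "norm (t *\<^sub>R h) < r" using t by simp
      then have p: "z + t *\<^sub>R h \<in> ball z r" using ball_add_in[of "t *\<^sub>R h" r z "ball z r"] by simp
      have z': "z \<in> ball z r" using r by simp
      have pO: "z + t *\<^sub>R h \<in> Oset" using p r by blast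
      have a1: "f i z + gf i z \<bullet> (z + t *\<^sub>R h - z) \<le> f i (z + t *\<^sub>R h)"
        using fo_convex[OF cvx z' p f_grad[OF i zO]] .
      have a2: "f i (z + t *\<^sub>R h) + gf i (z + t *\<^sub>R h) \<bullet> (z - (z + t *\<^sub>R h)) \<le> f i z"
        using fo_convex[OF cvx p z' f_grad[OF i pO]] .
      have "0 \<le> t * (\<phi> t - \<phi> 0)"
        using a1 a2 unfolding \<phi>_def by (simp add: inner_diff_left algebra_simps)
      then show ?thesis using t by (simp add: zero_le_mult_iff)
    qed
    show ?thesis using deriv_sign[OF D dd M] .
  qed
  obtain z0 where z0: "z0 \<in> K" using K_ne by blast
  have Li_nn: "0 \<le> Li i" if i: "i < m" for i
  proof -
    obtain b :: 'a where b: "b \<in> Basis" using nonempty_Basis by blast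
    have "0 \<le> Hf i z0 b \<bullet> b" using Hf_psd[OF i KO[OF z0]] .
    also have "\<dots> \<le> Li i * (norm b)\<^sup>2" using Li_bound[OF i z0] .
    finally show ?thesis using b by simp
  qed
  have Li_le: "Li i \<le> Lmax" if "i < m" for i
    unfolding Lmax_def using that by (intro Max_ge) auto
  have gf_lip: "norm (gf i a - gf i b) \<le> Lmax * norm (a - b)" if i: "i < m" and ab: "a \<in> K" "b \<in> K" for i a b
  proof -
    have "norm (gf i a - gf i b) \<le> Li i * norm (a - b)"
    proof (rule differentiable_bound[OF K_convex _ _ ab])
      show "(gf i has_derivative Hf i z) (at z within K)" if "z \<in> K" for z
        using f_hess[OF i KO[OF that]] by (rule has_derivative_at_withinI)
      show "onorm (Hf i z) \<le> Li i" if z: "z \<in> K" for z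
      proof (rule onorm_le)
        fix h
        have "norm (Hf i z h) \<le> max \<bar>0\<bar> \<bar>Li i\<bar> * norm h"
          using sym_bound[OF Hf_lin[OF i KO[OF z]] Hf_sym[OF i KO[OF z]], of 0 "Li i" h]
            Hf_psd[OF i KO[OF z]] Li_bound[OF i z] by simp
        then show "norm (Hf i z h) \<le> Li i * norm h" using Li_nn[OF i] by simp
      qed
    qed
    also have "\<dots> \<le> Lmax * norm (a - b)" using Li_le[OF i] by (intro mult_right_mono) auto
    finally show ?thesis .
  qed
  have Dle: "max \<bar>Dl i\<bar> \<bar>Du i\<bar> \<le> Dmax" if "i < m" for i
    unfolding Dmax_def using that by (intro Max_ge) auto
  have psi_lip: "norm ((gtf i a w - gF a) - (gtf i b w - gF b)) \<le> Dmax * norm (a - b)"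
    if i: "i < m" and w: "w \<in> K" and ab: "a \<in> K" "b \<in> K" for i w a b
  proof -
    have der: "((\<lambda>u. gtf i u w - gF u) has_derivative (\<lambda>h. Htf i z w h - HF z h)) (at z)" if "z \<in> K" for z
      using tf_hess[OF i KO[OF that] KO[OF w]] dgF[OF KO[OF that]] by (rule has_derivative_diff)
    have "norm ((gtf i a w - gF a) - (gtf i b w - gF b)) \<le> max \<bar>Dl i\<bar> \<bar>Du i\<bar> * norm (a - b)"
    proof (rule differentiable_bound[OF K_convex _ _ ab, where f = "\<lambda>u. gtf i u w - gF u"])
      show "((\<lambda>u. gtf i u w - gF u) has_derivative (\<lambda>h. Htf i z w h - HF z h)) (at z within K)" if "z \<in> K" for z
        using der[OF that] by (rule has_derivative_at_withinI)
      show "onorm (\<lambda>h. Htf i z w h - HF z h) \<le> max \<bar>Dl i\<bar> \<bar>Du i\<bar>" if z: "z \<in> K" for z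
      proof (rule onorm_le)
        fix h
        have lin: "linear (\<lambda>h. Htf i z w h - HF z h)" using der[OF z] has_derivative_linear by blast
        have sy: "(Htf i z w h - HF z h) \<bullet> k = (Htf i z w k - HF z k) \<bullet> h" for h k
          using Htf_sym[OF i KO[OF z] KO[OF w], of h k] HF_sym[OF KO[OF z], of h k]
          by (simp add: inner_diff_left)
        show "norm (Htf i z w h - HF z h) \<le> max \<bar>Dl i\<bar> \<bar>Du i\<bar> * norm h"
          using sym_bound[OF lin sy, of "Dl i" "Du i" h] D_bounds[OF i z w] by simp
      qed
    qed
    also have "\<dots> \<le> Dmax * norm (a - b)" using Dle[OF i] by (intro mult_right_mono) auto
    finally show ?thesis .
  qed
  have smono: "t\<mu> i * (norm (a - b))\<^sup>2 \<le> (gtf i a w - gtf i b w) \<bullet> (a - b)"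
    if i: "i < m" and w: "w \<in> K" and ab: "a \<in> K" "b \<in> K" for i w a b
  proof -
    define g where "g u = tf i u w - t\<mu> i / 2 * (u \<bullet> u)" for u
    have cvx: "convex_on K g" using tf_strong[OF i w]
      unfolding strongly_convex_with_def g_def by (simp add: power2_norm_eq_inner)
    have dg: "(g has_derivative (\<lambda>h. (gtf i u w - t\<mu> i *\<^sub>R u) \<bullet> h)) (at u)" if "u \<in> K" for u
    proof -
      have "(g has_derivative (\<lambda>h. gtf i u w \<bullet> h - t\<mu> i / 2 * (h \<bullet> u + u \<bullet> h))) (at u)"
        unfolding g_def using tf_grad[OF i KO[OF that] KO[OF w]]
        by (auto intro!: derivative_eq_intros)
      moreover have "(\<lambda>h. gtf i u w \<bullet> h - t\<mu> i / 2 * (h \<bullet> u + u \<bullet> h)) = (\<lambda>h. (gtf i u w - t\<mu> i *\<^sub>R u) \<bullet> h)"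
        by (auto simp: inner_diff_left inner_commute algebra_simps)
      ultimately show ?thesis by simp
    qed
    have a1: "g a + (gtf i a w - t\<mu> i *\<^sub>R a) \<bullet> (b - a) \<le> g b" using fo_convex[OF cvx ab dg[OF ab(1)]] .
    have a2: "g b + (gtf i b w - t\<mu> i *\<^sub>R b) \<bullet> (a - b) \<le> g a" using fo_convex[OF cvx ab(2,1) dg[OF ab(2)]] .
    have "0 \<le> ((gtf i a w - t\<mu> i *\<^sub>R a) - (gtf i b w - t\<mu> i *\<^sub>R b)) \<bullet> (a - b)"
      using a1 a2 by (simp add: inner_diff_left inner_diff_right inner_commute algebra_simps)
    then show ?thesis
      by (simp add: inner_diff_left inner_diff_right power2_norm_eq_inner algebra_simps inner_commute)
  qed
  have Fsc: "F a + gF a \<bullet> (z - a) + \<mu> / 2 * (norm (z - a))\<^sup>2 \<le> F z" if az: "a \<in> K" "z \<in> K" for a z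
  proof -
    define h where "h = z - a"
    have pK: "a + t *\<^sub>R h \<in> K" if "0 \<le> t" "t \<le> 1" for t
    proof -
      have "a + t *\<^sub>R h = (1 - t) *\<^sub>R a + t *\<^sub>R z" by (simp add: h_def algebra_simps)
      then show ?thesis using convexD[OF K_convex az, of "1 - t" t] that by simp
    qed
    define \<psi> where "\<psi> t = gF (a + t *\<^sub>R h) \<bullet> h - \<mu> * t * (norm h)\<^sup>2" for t
    define \<psi>' where "\<psi>' t = HF (a + t *\<^sub>R h) h \<bullet> h - \<mu> * (norm h)\<^sup>2" for t
    have dpsi: "(\<psi> has_real_derivative \<psi>' t) (at t)" if "0 \<le> t" "t \<le> 1" for t
    proof -
      have "((\<lambda>t. gF (a + t *\<^sub>R h) \<bullet> h) has_real_derivative HF (a + t *\<^sub>R h) h \<bullet> h) (at t)"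
        using line_deriv[of "\<lambda>u. gF u \<bullet> h" "\<lambda>v. HF (a + t *\<^sub>R h) v \<bullet> h" a t h]
          has_derivative_inner_left[OF dgF[OF KO[OF pK[OF that]]]] by simp
      then show ?thesis unfolding \<psi>_def \<psi>'_def by (auto intro!: derivative_eq_intros)
    qed
    have psi_mono: "\<psi> 0 \<le> \<psi> t" if t01: "0 \<le> t" "t \<le> 1" for t
    proof (cases "t = 0")
      case False
      then have t: "0 < t" using t01 by simp
      have dd: "\<And>x. 0 \<le> x \<Longrightarrow> x \<le> t \<Longrightarrow> (\<psi> has_real_derivative \<psi>' x) (at x)"
        using dpsi t01 by simp
      obtain \<xi> where \<xi>: "0 < \<xi>" "\<xi> < t" "\<psi> t - \<psi> 0 = (t - 0) * \<psi>' \<xi>"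
        using MVT2[OF t dd] by auto
      have "0 \<le> \<psi>' \<xi>" using HF_bounds[OF pK, of \<xi> h] \<xi> t01 by (simp add: \<psi>'_def)
      moreover have "0 \<le> t" using t01 by simp
      ultimately have "0 \<le> t * \<psi>' \<xi>" by simp
      then show ?thesis using \<xi>(3) by simp
    qed simp
    define \<phi> where "\<phi> t = F (a + t *\<^sub>R h) - t * (gF a \<bullet> h) - \<mu> / 2 * t\<^sup>2 * (norm h)\<^sup>2" for t
    have dphi: "(\<phi> has_real_derivative (\<psi> t - \<psi> 0)) (at t)" if "0 \<le> t" "t \<le> 1" for t
    proof -
      have "((\<lambda>t. F (a + t *\<^sub>R h)) has_real_derivative gF (a + t *\<^sub>R h) \<bullet> h) (at t)"
        using line_deriv[of F "\<lambda>v. gF (a + t *\<^sub>R h) \<bullet> v" a t h] dF[OF KO[OF pK[OF that]]] by simp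
      then have "(\<phi> has_real_derivative gF (a + t *\<^sub>R h) \<bullet> h - gF a \<bullet> h - \<mu> / 2 * (2 * t) * (norm h)\<^sup>2) (at t)"
        unfolding \<phi>_def by (auto intro!: derivative_eq_intros)
      then show ?thesis by (simp add: \<psi>_def algebra_simps)
    qed
    obtain \<xi> where \<xi>: "0 < \<xi>" "\<xi> < 1" "\<phi> 1 - \<phi> 0 = (1 - 0) * (\<psi> \<xi> - \<psi> 0)"
      using MVT2[OF zero_less_one, of \<phi> "\<lambda>t. \<psi> t - \<psi> 0"] dphi by auto
    have "0 \<le> \<phi> 1 - \<phi> 0" using \<xi> psi_mono[of \<xi>] by simp
    then show ?thesis by (simp add: \<phi>_def h_def)
  qed
  have xstar_vi: "0 \<le> gF xstar \<bullet> (z - xstar) + G z - G xstar" if z: "z \<in> K" for z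
    using vi_lemma[OF K_convex G_convex xstar_in z dF[OF KO[OF xstar_in]]] xstar_min U_eq by simp
  have Ugrow: "\<mu> / 2 * (norm (z - xstar))\<^sup>2 \<le> U z - U xstar" if z: "z \<in> K" for z
    using Fsc[OF xstar_in z] xstar_vi[OF z] U_eq[of z] U_eq[of xstar] by simp
  have tmin_pos: "t\<mu>min > 0"
  proof -
    have "t\<mu>min \<in> t\<mu> ` {..<m}" unfolding t\<mu>min_def using m_pos by (intro Min_in) (auto simp: lessThan_empty_iff)
    then show ?thesis using tmu_pos by auto
  qed
  have tmin_le: "t\<mu>min \<le> t\<mu> i" if "i < m" for i
    unfolding t\<mu>min_def using that by (intro Min_le) auto
  have Dmax_nn: "0 \<le> Dmax" using Dle[of 0] m_pos
    by (metis abs_ge_zero max.bounded_iff order_trans less_le_trans zero_less_one le_less_trans less_eq_Suc_le One_nat_def)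
  define ybar where "ybar = (1 / real m) *\<^sub>R (\<Sum>j<m. y \<nu> j)"
  have ybar_eq: "ybar = (1 / real m) *\<^sub>R (\<Sum>j<m. gf j (x \<nu> j))" using ysum by (simp add: ybar_def)
  define r where "r i = norm (x \<nu> i - xstar)" for i
  have per_i: "norm (d \<nu> i) \<le> (Dmax / t\<mu>min + 1) * r i + (1 / t\<mu>min) * norm (y \<nu> i - ybar)
      + (1 / t\<mu>min) * norm (ybar - gF (x \<nu> i))" if i: "i < m" for i
  proof -
    define xi where "xi = x \<nu> i"
    define xh where "xh = xhat \<nu> i"
    define yi where "yi = y \<nu> i"
    have xiK: "xi \<in> K" using xK[OF i] by (simp add: xi_def)
    have xhK: "xh \<in> K" using xhat_in[OF i] by (simp add: xh_def)
    define s where "s u = tf i u xi + (yi - gf i xi) \<bullet> (u - xi)" for u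
    have ds: "(s has_derivative (\<lambda>h. (gtf i xh xi + (yi - gf i xi)) \<bullet> h)) (at xh)"
    proof -
      have "(s has_derivative (\<lambda>h. gtf i xh xi \<bullet> h + (yi - gf i xi) \<bullet> h)) (at xh)"
        unfolding s_def using tf_grad[OF i KO[OF xhK] KO[OF xiK]]
        by (auto intro!: derivative_eq_intros)
      then show ?thesis by (simp add: inner_add_left)
    qed
    have mn: "s xh + G xh \<le> s w + G w" if "w \<in> K" for w
      using xhat_min[OF i that] unfolding s_def xh_def xi_def yi_def by simp
    have vi1: "0 \<le> (gtf i xh xi + (yi - gf i xi)) \<bullet> (xstar - xh) + G xstar - G xh"
      using vi_lemma[OF K_convex G_convex xhK xstar_in ds mn] .
    have vi2: "0 \<le> gF xstar \<bullet> (xh - xstar) + G xh - G xstar" using xstar_vi[OF xhK] .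
    have sm: "t\<mu> i * (norm (xh - xstar))\<^sup>2 \<le> (gtf i xh xi - gtf i xstar xi) \<bullet> (xh - xstar)"
      using smono[OF i xiK xhK xstar_in] .
    have pl: "norm ((gtf i xstar xi - gF xstar) - (gtf i xi xi - gF xi)) \<le> Dmax * norm (xstar - xi)"
      using psi_lip[OF i xiK xstar_in xiK] .
    have cons: "gtf i xi xi = gf i xi" using tf_consistent[OF i KO[OF xiK]] .
    define e where "e = xh - xstar"
    define v where "v = (gtf i xstar xi - gF xstar) - (gf i xi - gF xi) + (yi - gF xi)"
    have "0 \<le> (gtf i xh xi + (yi - gf i xi)) \<bullet> (xstar - xh) + gF xstar \<bullet> (xh - xstar)"
      using vi1 vi2 by simp
    also have "(gtf i xh xi + (yi - gf i xi)) \<bullet> (xstar - xh) + gF xstar \<bullet> (xh - xstar)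
        = - ((gtf i xh xi - gtf i xstar xi) \<bullet> (xh - xstar)) - v \<bullet> e"
      unfolding v_def e_def
      by (simp add: inner_diff_left inner_diff_right inner_add_left inner_add_right algebra_simps)
    finally have "t\<mu> i * (norm e)\<^sup>2 \<le> - (v \<bullet> e)" using sm unfolding e_def by simp
    also have "\<dots> \<le> norm v * norm e"
      using Cauchy_Schwarz_ineq2[of v e] by linarith
    finally have k1: "t\<mu> i * (norm e)\<^sup>2 \<le> norm v * norm e" .
    have k2: "t\<mu> i * norm e \<le> norm v"
    proof (cases "norm e = 0")
      case True then show ?thesis by simp
    next
      case False
      then have "norm e > 0" by simp
      moreover have "(t\<mu> i * norm e) * norm e \<le> norm v * norm e"
        using k1 by (simp add: power2_eq_square mult.assoc)
      ultimately show ?thesis by simp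
    qed
    have nv: "norm v \<le> Dmax * r i + norm (yi - ybar) + norm (ybar - gF xi)"
    proof -
      have "norm v \<le> norm ((gtf i xstar xi - gF xstar) - (gf i xi - gF xi)) + norm (yi - gF xi)"
        unfolding v_def by (rule norm_triangle_ineq)
      also have "norm (yi - gF xi) \<le> norm (yi - ybar) + norm (ybar - gF xi)"
        using norm_triangle_ineq[of "yi - ybar" "ybar - gF xi"] by simp
      also have "norm (xstar - xi) = r i" by (simp add: r_def xi_def norm_minus_commute)
      then have "norm ((gtf i xstar xi - gF xstar) - (gf i xi - gF xi)) \<le> Dmax * r i"
        using pl cons by simp
      finally show ?thesis by simp
    qed
    have "t\<mu>min * norm e \<le> t\<mu> i * norm e" using tmin_le[OF i] by (intro mult_right_mono) auto
    then have "t\<mu>min * norm e \<le> Dmax * r i + norm (yi - ybar) + norm (ybar - gF xi)"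
      using k2 nv by linarith
    then have ne: "norm e \<le> (Dmax * r i + norm (yi - ybar) + norm (ybar - gF xi)) / t\<mu>min"
      using tmin_pos by (simp add: field_simps)
    have "norm (d \<nu> i) \<le> norm e + r i"
    proof -
      have "d \<nu> i = e - (xi - xstar)" by (simp add: d_def e_def xh_def xi_def)
      then show ?thesis using norm_triangle_ineq4[of e "xi - xstar"] by (simp add: r_def xi_def)
    qed
    also have "\<dots> \<le> (Dmax * r i + norm (yi - ybar) + norm (ybar - gF xi)) / t\<mu>min + r i"
      using ne by simp
    also have "\<dots> = (Dmax / t\<mu>min + 1) * r i + (1 / t\<mu>min) * norm (y \<nu> i - ybar)
      + (1 / t\<mu>min) * norm (ybar - gF (x \<nu> i))"
      using tmin_pos by (simp add: field_simps yi_def xi_def)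
    finally show ?thesis .
  qed
  define A where "A = Dmax / t\<mu>min + 1"
  define B where "B = 1 / t\<mu>min"
  define a where "a i = norm (y \<nu> i - ybar)" for i
  define b where "b i = norm (ybar - gF (x \<nu> i))" for i
  have Lmax_nn: "0 \<le> Lmax" using Li_nn[of 0] Li_le[of 0] m_pos by simp
  have A_nn: "0 \<le> A" using Dmax_nn tmin_pos by (simp add: A_def)
  have B_nn: "0 \<le> B" using tmin_pos by (simp add: B_def)
  have r_nn: "0 \<le> r i" for i by (simp add: r_def)
  have sq_i: "(norm (d \<nu> i))\<^sup>2 \<le> 3 * (A\<^sup>2 * (r i)\<^sup>2 + B\<^sup>2 * (a i)\<^sup>2 + B\<^sup>2 * (b i)\<^sup>2)" if i: "i < m" for i
  proof -
    have "norm (d \<nu> i) \<le> A * r i + B * a i + B * b i"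
      using per_i[OF i] by (simp add: A_def B_def a_def b_def)
    then have "(norm (d \<nu> i))\<^sup>2 \<le> (A * r i + B * a i + B * b i)\<^sup>2"
      by (intro power_mono) auto
    also have "\<dots> \<le> 3 * ((A * r i)\<^sup>2 + (B * a i)\<^sup>2 + (B * b i)\<^sup>2)"
      by (rule sq3)
    finally show ?thesis by (simp add: power_mult_distrib)
  qed
  define Rbar where "Rbar = (1 / real m) * (\<Sum>j<m. r j)"
  have b_le: "b i \<le> Lmax * (Rbar + r i)" if i: "i < m" for i
  proof -
    have "ybar - gF (x \<nu> i) = (1 / real m) *\<^sub>R (\<Sum>j<m. gf j (x \<nu> j) - gf j (x \<nu> i))"
      by (simp add: ybar_eq gF_def sum_subtractf scaleR_diff_right)
    then have "b i = (1 / real m) * norm (\<Sum>j<m. gf j (x \<nu> j) - gf j (x \<nu> i))"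
      using mpos by (simp add: b_def)
    also have "\<dots> \<le> (1 / real m) * (\<Sum>j<m. Lmax * (r j + r i))"
    proof (intro mult_left_mono)
      have "norm (\<Sum>j<m. gf j (x \<nu> j) - gf j (x \<nu> i)) \<le> (\<Sum>j<m. norm (gf j (x \<nu> j) - gf j (x \<nu> i)))"
        by (rule norm_sum)
      also have "\<dots> \<le> (\<Sum>j<m. Lmax * (r j + r i))"
      proof (rule sum_mono)
        fix j assume "j \<in> {..<m}"
        then have j: "j < m" by simp
        have "norm (gf j (x \<nu> j) - gf j (x \<nu> i)) \<le> Lmax * norm (x \<nu> j - x \<nu> i)"
          using gf_lip[OF j xK[OF j] xK[OF i]] .
        also have "norm (x \<nu> j - x \<nu> i) \<le> r j + r i"
          unfolding r_def using norm_triangle_ineq4[of "x \<nu> j - xstar" "x \<nu> i - xstar"]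
          by (simp add: norm_minus_commute)
        then have "Lmax * norm (x \<nu> j - x \<nu> i) \<le> Lmax * (r j + r i)"
          using Lmax_nn by (intro mult_left_mono)
        finally show "norm (gf j (x \<nu> j) - gf j (x \<nu> i)) \<le> Lmax * (r j + r i)" .
      qed
      finally show "norm (\<Sum>j<m. gf j (x \<nu> j) - gf j (x \<nu> i)) \<le> (\<Sum>j<m. Lmax * (r j + r i))" .
    qed simp
    also have "\<dots> = Lmax * (Rbar + r i)"
      using mpos by (simp add: Rbar_def sum.distrib sum_distrib_left[symmetric] field_simps)
    finally show ?thesis .
  qed
  have Rbar_sq: "real m * Rbar\<^sup>2 \<le> (\<Sum>j<m. (r j)\<^sup>2)"
  proof -
    have "(\<Sum>j<m. r j * 1)\<^sup>2 \<le> (\<Sum>j<m. (r j)\<^sup>2) * (\<Sum>j<m. (1::real)\<^sup>2)"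
      by (rule Cauchy_Schwarz_ineq_sum)
    then have "(\<Sum>j<m. r j)\<^sup>2 \<le> (\<Sum>j<m. (r j)\<^sup>2) * real m" by simp
    then show ?thesis using mpos by (simp add: Rbar_def power2_eq_square field_simps)
  qed
  have b_sum: "(\<Sum>i<m. (b i)\<^sup>2) \<le> 4 * Lmax\<^sup>2 * (\<Sum>i<m. (r i)\<^sup>2)"
  proof -
    have "(\<Sum>i<m. (b i)\<^sup>2) \<le> (\<Sum>i<m. 2 * Lmax\<^sup>2 * (Rbar\<^sup>2 + (r i)\<^sup>2))"
    proof (rule sum_mono)
      fix i assume "i \<in> {..<m}"
      then have i: "i < m" by simp
      have "(b i)\<^sup>2 \<le> (Lmax * (Rbar + r i))\<^sup>2"
        using b_le[OF i] by (intro power_mono) (auto simp: b_def)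
      also have "\<dots> \<le> 2 * Lmax\<^sup>2 * (Rbar\<^sup>2 + (r i)\<^sup>2)"
      proof -
        have "(Rbar + r i)\<^sup>2 \<le> 2 * (Rbar\<^sup>2 + (r i)\<^sup>2)"
          by (rule sq2)
        then have "Lmax\<^sup>2 * (Rbar + r i)\<^sup>2 \<le> Lmax\<^sup>2 * (2 * (Rbar\<^sup>2 + (r i)\<^sup>2))"
          by (intro mult_left_mono) auto
        moreover have "(Lmax * (Rbar + r i))\<^sup>2 = Lmax\<^sup>2 * (Rbar + r i)\<^sup>2" by (rule power_mult_distrib)
        ultimately show ?thesis by (simp only: mult.assoc)
      qed
      finally show "(b i)\<^sup>2 \<le> 2 * Lmax\<^sup>2 * (Rbar\<^sup>2 + (r i)\<^sup>2)" .
    qed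
    also have "\<dots> = 2 * Lmax\<^sup>2 * (real m * Rbar\<^sup>2 + (\<Sum>i<m. (r i)\<^sup>2))"
      by (simp add: sum.distrib sum_distrib_left[symmetric])
    also have "\<dots> \<le> 2 * Lmax\<^sup>2 * ((\<Sum>i<m. (r i)\<^sup>2) + (\<Sum>i<m. (r i)\<^sup>2))"
      using Rbar_sq by (intro mult_left_mono) auto
    finally show ?thesis by simp
  qed
  have r_sum: "(\<Sum>i<m. (r i)\<^sup>2) \<le> 2 / \<mu> * (\<Sum>i<m. U (x \<nu> i) - U xstar)"
  proof -
    have "(\<Sum>i<m. (r i)\<^sup>2) \<le> (\<Sum>i<m. 2 / \<mu> * (U (x \<nu> i) - U xstar))"
    proof (rule sum_mono)
      fix i assume "i \<in> {..<m}"
      then have i: "i < m" by simp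
      have "\<mu> / 2 * (r i)\<^sup>2 \<le> U (x \<nu> i) - U xstar" using Ugrow[OF xK[OF i]] by (simp add: r_def)
      then show "(r i)\<^sup>2 \<le> 2 / \<mu> * (U (x \<nu> i) - U xstar)" using mu_pos by (simp add: field_simps)
    qed
    then show ?thesis by (simp add: sum_distrib_left)
  qed
  have "(\<Sum>i<m. (norm (d \<nu> i))\<^sup>2) \<le> (\<Sum>i<m. 3 * (A\<^sup>2 * (r i)\<^sup>2 + B\<^sup>2 * (a i)\<^sup>2 + B\<^sup>2 * (b i)\<^sup>2))"
    using sq_i by (intro sum_mono) auto
  also have "\<dots> = 3 * A\<^sup>2 * (\<Sum>i<m. (r i)\<^sup>2) + 3 * B\<^sup>2 * (\<Sum>i<m. (a i)\<^sup>2) + 3 * B\<^sup>2 * (\<Sum>i<m. (b i)\<^sup>2)"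
    by (simp add: sum.distrib sum_distrib_left algebra_simps)
  also have "\<dots> \<le> 3 * A\<^sup>2 * (\<Sum>i<m. (r i)\<^sup>2) + 3 * B\<^sup>2 * (\<Sum>i<m. (a i)\<^sup>2) + 3 * B\<^sup>2 * (4 * Lmax\<^sup>2 * (\<Sum>i<m. (r i)\<^sup>2))"
    using b_sum by (intro add_left_mono mult_left_mono) auto
  also have "\<dots> = 3 * (A\<^sup>2 + 4 * Lmax\<^sup>2 * B\<^sup>2) * (\<Sum>i<m. (r i)\<^sup>2) + 3 * B\<^sup>2 * (\<Sum>i<m. (a i)\<^sup>2)"
    by (simp add: algebra_simps)
  also have "\<dots> \<le> 3 * (A\<^sup>2 + 4 * Lmax\<^sup>2 * B\<^sup>2) * (2 / \<mu> * (\<Sum>i<m. U (x \<nu> i) - U xstar)) + 3 * B\<^sup>2 * (\<Sum>i<m. (a i)\<^sup>2)"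
    using r_sum by (intro add_right_mono mult_left_mono) auto
  also have "\<dots> = 6 / \<mu> * ((Dmax / t\<mu>min + 1)\<^sup>2 + 4 * Lmax\<^sup>2 / t\<mu>min\<^sup>2) * (\<Sum>i<m. U (x \<nu> i) - U xstar)
      + 3 / t\<mu>min\<^sup>2 * (\<Sum>i<m. (norm (y \<nu> i - (1 / real m) *\<^sub>R (\<Sum>j<m. y \<nu> j)))\<^sup>2)"
  proof -
    have B2: "B\<^sup>2 = 1 / t\<mu>min\<^sup>2" by (simp add: B_def power_divide)
    have X: "A\<^sup>2 + 4 * Lmax\<^sup>2 * B\<^sup>2 = (Dmax / t\<mu>min + 1)\<^sup>2 + 4 * Lmax\<^sup>2 / t\<mu>min\<^sup>2"
      by (simp add: A_def B2)
    have Sa: "(\<Sum>i<m. (a i)\<^sup>2) = (\<Sum>i<m. (norm (y \<nu> i - (1 / real m) *\<^sub>R (\<Sum>j<m. y \<nu> j)))\<^sup>2)"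
      by (simp add: a_def ybar_def)
    show ?thesis unfolding X[symmetric] Sa B2 by (simp add: algebra_simps)
  qed
  finally show ?thesis .
qed

end
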